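(* Let $\Theta$ be a well-formed System $\mathsf{F_\wedge}$ context, $S, S'$ types over $\Theta$, $T$ a type over $\Theta, X<:\top$, and $t$ a term. If $\Theta \vdash t : \forall X.\,T[X\wedge S/X^-]$ and $\Theta \vdash S' <: S$, then $\Theta \vdash t\{S'\} : T[S'/X]$.
   Context: System $\mathsf{F_\wedge}$: raw types $T ::= \top \mid X \mid T \to T \mid \forall X.T \mid T \wedge T$ ($\forall X.T$ means $\forall(X<:\top).T$), up to $\alpha$-conversion. Contexts: finite sequences of $X<:T$ or $x:T$ with distinct variables, each type well-formed over the preceding part. Subtyping rules: (Var) $\Theta,X<:T,\Theta'\vdash X<:T$; (Top) $T<:\top$; (Refl); (Trans); ($\to$) from $S'<:S$, $T<:T'$ infer $S\to T<:S'\to T'$; ($\forall$) from $\Theta,X<:\top\vdash S<:T$ infer $\Theta\vdash\forall X.S<:\forall X.T$; (meet) $S\wedge S'<:S$, $S\wedge S'<:S'$, from $T<:S$, $T<:S'$ infer $T<:S\wedge S'$. Raw terms $t ::= \mathsf{top} \mid x \mid \lambda(x:T).t \mid \Lambda(X<:T).t \mid t\,t \mid t\{T\}$. Typing rules: $\Theta\vdash\mathsf{top}:\top$; $\Theta,x:T,\Theta'\vdash x:T$; (sub) from $t:T$ and $T<:T'$ infer $t:T'$; from $\Theta,x:S\vdash t:T$ infer $\Theta\vdash\lambda(x:S).t:S\to T$; from $t:S\to T$ and $s:S$ infer $t\,s:T$; from $\Theta,X<:S\vdash t:T$ infer $\Theta\vdash\Lambda(X<:S).t:\forall(X<:S).T$;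 from $\Theta\vdash t:\forall(X<:S).T$ and $\Theta\vdash S'<:S$ infer $\Theta\vdash t\{S'\}:T[S'/X]$. Mixed substitution $T[(S_-,S_+)/X]$: $X\mapsto S_+$; other variables and $\top$ unchanged; $(T\to T')[(S_-,S_+)/X]=T[(S_+,S_-)/X]\to T'[(S_-,S_+)/X]$; commutes with $\forall Y$ and $\wedge$. $T[U/X^-]$ abbreviates $T[(U,X)/X]$. *)

theory Defs
  imports Main
begin

text \<open>Type variables and term variables
  are indexed separately: a type variable index counts only the type-variable
  bindings of the context (most recent first), a term variable index counts only
  the term-variable bindings.\<close>

datatype type =
    Top
  | TVar nat
  | Arr type type
  | All type            \<comment> \<open>All X. T, i.e. All (X <: Top). T; X is index 0 in the body\<close>
  | Meet type type

datatype trm =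
    top
  | Var nat
  | Abs type trm
  | TAbs type trm
  | App trm trm
  | TApp trm type

datatype binding = VarB type | TVarB type

type_synonym env = "binding list"

fun shiftT :: "nat \<Rightarrow> nat \<Rightarrow> type \<Rightarrow> type" where
  "shiftT n k Top = Top"
| "shiftT n k (TVar i) = (if i < k then TVar i else TVar (i + n))"
| "shiftT n k (Arr T U) = Arr (shiftT n k T) (shiftT n k U)"
| "shiftT n k (All T) = All (shiftT n (Suc k) T)"
| "shiftT n k (Meet T U) = Meet (shiftT n k T) (shiftT n k U)"

fun substT :: "type \<Rightarrow> nat \<Rightarrow> type \<Rightarrow> type" where
  "substT Top k S = Top"
| "substT (TVar i) k S =
     (if i < k then TVar i else if i = k then shiftT k 0 S else TVar (i - 1))"
| "substT (Arr T U) k S = Arr (substT T k S) (substT U k S)"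
| "substT (All T) k S = All (substT T (Suc k) S)"
| "substT (Meet T U) k S = Meet (substT T k S) (substT U k S)"

text \<open>Mixed substitution \<open>T[(Sm,Sp)/X_k]\<close>: positive occurrences of \<open>X_k\<close> become \<open>Sp\<close>,
  negative ones \<open>Sm\<close>; all other variables are unchanged (no decrement), so
  \<open>Sm\<close>, \<open>Sp\<close> live in the same context as \<open>T\<close>.\<close>
fun msubstT :: "type \<Rightarrow> nat \<Rightarrow> type \<Rightarrow> type \<Rightarrow> type" where
  "msubstT Top k Sm Sp = Top"
| "msubstT (TVar i) k Sm Sp = (if i = k then shiftT k 0 Sp else TVar i)"
| "msubstT (Arr T U) k Sm Sp = Arr (msubstT T k Sp Sm) (msubstT U k Sm Sp)"
| "msubstT (All T) k Sm Sp = All (msubstT T (Suc k) Sm Sp)"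
| "msubstT (Meet T U) k Sm Sp = Meet (msubstT T k Sm Sp) (msubstT U k Sm Sp)"

text \<open>\<open>T[U/X^-] = T[(U,X)/X]\<close> for the variable \<open>X\<close> = index 0.\<close>
definition negsubst :: "type \<Rightarrow> type \<Rightarrow> type" where
  "negsubst T U = msubstT T 0 U (TVar 0)"

fun ntv :: "env \<Rightarrow> nat" where
  "ntv [] = 0"
| "ntv (VarB T # \<Gamma>) = ntv \<Gamma>"
| "ntv (TVarB T # \<Gamma>) = Suc (ntv \<Gamma>)"

text \<open>Bound of the \<open>i\<close>-th type variable, expressed in the whole context.\<close>
fun tlookup :: "env \<Rightarrow> nat \<Rightarrow> type option" where
  "tlookup [] i = None"
| "tlookup (VarB T # \<Gamma>) i = tlookup \<Gamma> i"
| "tlookup (TVarB T # \<Gamma>) i =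
     (case i of 0 \<Rightarrow> Some (shiftT 1 0 T)
              | Suc j \<Rightarrow> map_option (shiftT 1 0) (tlookup \<Gamma> j))"

text \<open>Type of the \<open>i\<close>-th term variable, expressed in the whole context.\<close>
fun vlookup :: "env \<Rightarrow> nat \<Rightarrow> type option" where
  "vlookup [] i = None"
| "vlookup (VarB T # \<Gamma>) i = (case i of 0 \<Rightarrow> Some T | Suc j \<Rightarrow> vlookup \<Gamma> j)"
| "vlookup (TVarB T # \<Gamma>) i = map_option (shiftT 1 0) (vlookup \<Gamma> i)"

fun closedT :: "nat \<Rightarrow> type \<Rightarrow> bool" where
  "closedT n Top = True"
| "closedT n (TVar i) = (i < n)"
| "closedT n (Arr T U) = (closedT n T \<and> closedT n U)"
| "closedT n (All T) = closedT (Suc n) T"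
| "closedT n (Meet T U) = (closedT n T \<and> closedT n U)"

definition wfT :: "env \<Rightarrow> type \<Rightarrow> bool" where
  "wfT \<Gamma> T = closedT (ntv \<Gamma>) T"

fun wfE :: "env \<Rightarrow> bool" where
  "wfE [] = True"
| "wfE (VarB T # \<Gamma>) = (wfT \<Gamma> T \<and> wfE \<Gamma>)"
| "wfE (TVarB T # \<Gamma>) = (wfT \<Gamma> T \<and> wfE \<Gamma>)"

inductive subtype :: "env \<Rightarrow> type \<Rightarrow> type \<Rightarrow> bool" ("_ \<turnstile> _ <: _" [50, 50, 50] 50) where
  S_Var: "tlookup \<Gamma> i = Some U \<Longrightarrow> \<Gamma> \<turnstile> TVar i <: U"
| S_Top: "\<Gamma> \<turnstile> T <: Top"
| S_Refl: "\<Gamma> \<turnstile> T <: T"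
| S_Trans: "\<Gamma> \<turnstile> S <: U \<Longrightarrow> \<Gamma> \<turnstile> U <: T \<Longrightarrow> \<Gamma> \<turnstile> S <: T"
| S_Arr: "\<Gamma> \<turnstile> S' <: S \<Longrightarrow> \<Gamma> \<turnstile> T <: T' \<Longrightarrow> \<Gamma> \<turnstile> Arr S T <: Arr S' T'"
| S_All: "TVarB Top # \<Gamma> \<turnstile> S <: T \<Longrightarrow> \<Gamma> \<turnstile> All S <: All T"
| S_Meet1: "\<Gamma> \<turnstile> Meet S S' <: S"
| S_Meet2: "\<Gamma> \<turnstile> Meet S S' <: S'"
| S_Meet3: "\<Gamma> \<turnstile> T <: S \<Longrightarrow> \<Gamma> \<turnstile> T <: S' \<Longrightarrow> \<Gamma> \<turnstile> T <: Meet S S'"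

inductive typing :: "env \<Rightarrow> trm \<Rightarrow> type \<Rightarrow> bool" ("_ \<turnstile> _ : _" [50, 50, 50] 50) where
  T_Top: "\<Gamma> \<turnstile> top : Top"
| T_Var: "vlookup \<Gamma> i = Some T \<Longrightarrow> \<Gamma> \<turnstile> Var i : T"
| T_Sub: "\<Gamma> \<turnstile> t : T \<Longrightarrow> \<Gamma> \<turnstile> T <: T' \<Longrightarrow> \<Gamma> \<turnstile> t : T'"
| T_Abs: "VarB S # \<Gamma> \<turnstile> t : T \<Longrightarrow> \<Gamma> \<turnstile> Abs S t : Arr S T"
| T_App: "\<Gamma> \<turnstile> t : Arr S T \<Longrightarrow> \<Gamma> \<turnstile> s : S \<Longrightarrow> \<Gamma> \<turnstile> App t s : T"
| T_TAbs: "TVarB Top # \<Gamma> \<turnstile> t : T \<Longrightarrow> \<Gamma> \<turnstile> TAbs Top t : All T"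
| T_TApp: "\<Gamma> \<turnstile> t : All T \<Longrightarrow> \<Gamma> \<turnstile> S' <: Top \<Longrightarrow> \<Gamma> \<turnstile> TApp t S' : substT T 0 S'"

end

theory Submission
  imports Defs
begin

fun msub :: "type \<Rightarrow> nat \<Rightarrow> type \<Rightarrow> type \<Rightarrow> type" where
  "msub Top k A B = Top"
| "msub (TVar i) k A B = (if i < k then TVar i else if i = k then shiftT k 0 B else TVar (i - 1))"
| "msub (Arr T U) k A B = Arr (msub T k B A) (msub U k A B)"
| "msub (All T) k A B = All (msub T (Suc k) A B)"
| "msub (Meet T U) k A B = Meet (msub T k A B) (msub U k A B)"

lemma shift0: "shiftT 0 j U = U"
  by (induction U arbitrary: j) auto

lemma shift0f: "shiftT 0 j = id"
  using shift0 by auto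

lemma shift_comp: "i \<le> j \<Longrightarrow> j \<le> i + b \<Longrightarrow> shiftT a j (shiftT b i U) = shiftT (a + b) i U"
  by (induction U arbitrary: i j) auto

lemma shift_comm: "shiftT 1 (k + j) (shiftT k j U) = shiftT k j (shiftT 1 j U)"
proof (induction U arbitrary: j)
  case (All U)
  then show ?case using All.IH[of "Suc j"] by simp
qed auto

lemma subst_shift1: "substT (shiftT 1 j X) j U = X"
  by (induction X arbitrary: j) auto

lemma subst_shift: "substT (shiftT k j X) (k + j) U = shiftT k j (substT X j U)"
proof (induction X arbitrary: j)
  case (TVar i)
  then show ?case by (auto simp: shift_comp)
next
  case (All X)
  then show ?case by (metis add_Suc_right shiftT.simps(4) substT.simps(4))
qed auto

lemma msub_same: "msub T k B B = substT T k B"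
  by (induction T arbitrary: k) auto

lemma subst_msubst: "substT (msubstT T k Sm Sp) k U = msub T k (substT Sm 0 U) (substT Sp 0 U)"
proof (induction T arbitrary: k Sm Sp)
  case (TVar i)
  then show ?case using subst_shift[of k 0 Sp U] by auto
qed auto

lemma tlookup_rep: "tlookup (replicate k (TVarB Top) @ \<Theta>) i =
   (if i < k then Some Top else map_option (shiftT k 0) (tlookup \<Theta> (i - k)))"
proof (induction k arbitrary: i)
  case 0
  then show ?case by (simp add: shift0f option.map_id)
next
  case (Suc k)
  then show ?case
    by (cases i) (auto simp: option.map_comp comp_def shift_comp)
qed

lemma weaken_gen:
  assumes "\<Gamma> \<turnstile> A <: B" "\<Gamma> = replicate k (TVarB Top) @ \<Theta>"
  shows "replicate k (TVarB Top) @ (TVarB Top # \<Theta>) \<turnstile> shiftT 1 k A <: shiftT 1 k B"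
  using assms
proof (induction arbitrary: k rule: subtype.induct)
  case (S_Var \<Gamma> i U)
  show ?case
  proof (cases "i < k")
    case True
    then show ?thesis using S_Var
      by (auto simp: tlookup_rep intro!: subtype.S_Var)
  next
    case False
    then obtain U0 where U0: "tlookup \<Theta> (i - k) = Some U0" "U = shiftT k 0 U0"
      using S_Var by (auto simp: tlookup_rep)
    have "tlookup (replicate k (TVarB Top) @ (TVarB Top # \<Theta>)) (i + 1) = Some (shiftT 1 k U)"
      using False U0 shift_comm[of k 0 U0]
      by (auto simp: tlookup_rep Suc_diff_le)
    then show ?thesis using False by (auto intro: subtype.S_Var)
  qed
next
  case (S_All \<Gamma> S T)
  then have "replicate (Suc k) (TVarB Top) @ (TVarB Top # \<Theta>) \<turnstile> shiftT 1 (Suc k) S <: shiftT 1 (Suc k) T"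
    using S_All.IH[of "Suc k"] by simp
  then show ?case by (auto intro: subtype.S_All)
qed (auto intro: subtype.intros)

lemma weaken_k: "\<Theta> \<turnstile> A <: B \<Longrightarrow> replicate k (TVarB Top) @ \<Theta> \<turnstile> shiftT k 0 A <: shiftT k 0 B"
proof (induction k)
  case 0
  then show ?case by (simp add: shift0)
next
  case (Suc k)
  from weaken_gen[OF Suc.IH[OF Suc.prems], of 0] show ?case
    by (simp add: shift_comp)
qed

lemma mono:
  assumes "\<Theta> \<turnstile> B <: A" "\<Theta> \<turnstile> P <: Q"
  shows "replicate k (TVarB Top) @ \<Theta> \<turnstile> msub T k A P <: msub T k B Q"
  using assms
proof (induction T arbitrary: k A B P Q)
  case (TVar i)
  then show ?case by (auto intro: subtype.intros weaken_k)
next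
  case (Arr T1 T2)
  then show ?case by (auto intro: subtype.S_Arr)
next
  case (All T)
  from All.IH[OF All.prems, of "Suc k"] show ?case by (auto intro: subtype.S_All)
next
  case (Meet T1 T2)
  have a: "replicate k (TVarB Top) @ \<Theta> \<turnstile> msub T1 k A P <: msub T1 k B Q"
    and b: "replicate k (TVarB Top) @ \<Theta> \<turnstile> msub T2 k A P <: msub T2 k B Q"
    using Meet by auto
  show ?case
    by (simp, meson a b subtype.S_Meet1 subtype.S_Meet2 subtype.S_Meet3 subtype.S_Trans)
qed (auto intro: subtype.intros)

theorem proposition5p1:
  assumes "wfE \<Theta>"
    and "wfT \<Theta> S" and "wfT \<Theta> S'"
    and "wfT (TVarB Top # \<Theta>) T"
    and "\<Theta> \<turnstile> t : All (negsubst T (Meet (TVar 0) (shiftT 1 0 S)))"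
    and "\<Theta> \<turnstile> S' <: S"
  shows "\<Theta> \<turnstile> TApp t S' : substT T 0 S'"
proof -
  have 1: "\<Theta> \<turnstile> TApp t S' : substT (negsubst T (Meet (TVar 0) (shiftT 1 0 S))) 0 S'"
    using assms(5) by (rule T_TApp) (rule S_Top)
  have eq: "substT (negsubst T (Meet (TVar 0) (shiftT 1 0 S))) 0 S' = msub T 0 (Meet S' S) S'"
    unfolding negsubst_def subst_msubst using subst_shift1[of 0 S S'] by (simp add: shift0)
  have le: "\<Theta> \<turnstile> S' <: Meet S' S" using assms(6) by (auto intro: subtype.intros)
  have "\<Theta> \<turnstile> msub T 0 (Meet S' S) S' <: msub T 0 S' S'"
    using mono[OF le S_Refl, of 0 T] by simp
  then show ?thesis using 1 eq msub_same by (metis T_Sub)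
qed

end
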